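(* In the setting of the context, with $S,E,I$ as defined there, the function $E(t)+I(t)$ attains its maximum \[ \max_{t\ge0}\bigl(E(t)+I(t)\bigr)=\tilde S+\tilde E+\tilde I-\frac{\gamma}{\beta}\Bigl(1+\log\tilde S-\log\frac{\gamma}{\beta}\Bigr) \] at \[ t=T_3:=\varphi\Bigl(\frac{\gamma}{\beta\tilde S e^{(\beta/\gamma)\tilde R}}\Bigr)=\int_{\gamma/(\beta\tilde S e^{(\beta/\gamma)\tilde R})}^{u_0}\frac{d\xi}{\xi\psi(\xi)}=S^{-1}\Bigl(\frac{\gamma}{\beta}\Bigr). \] Moreover, $E+I$ is increasing on $[0,T_3)$ and decreasing on $(T_3,\infty)$.
   Context: Let $\beta,\gamma,\delta>0$ be constants and $\tilde S,\tilde E,\tilde I,\tilde R$ real numbers with $N:=\tilde S+\tilde E+\tilde I+\tilde R>0$. Standing assumptions: (A1) $\tilde I>0$; (A2) $\tilde E>(\gamma/\delta)\tilde I$; (A3) $\tilde S>\delta\tilde E/(\beta\tilde I)$; (A4) $\tilde R\ge 0$ and $N>\tilde S e^{(\beta/\gamma)\tilde R}+\tilde R$. Let $\alpha$ be the unique solution in $(\tilde R,N)$ of $x=N-\tilde S e^{(\beta/\gamma)\tilde R}e^{-(\beta/\gamma)x}$, and assume (A5) $\tilde S<(\gamma/\beta)e^{(\beta/\gamma)(\alpha-\tilde R)}$. Put $u_0:=e^{-(\beta/\gamma)\tilde R}$, $u_\infty:=e^{-(\beta/\gamma)\alpha}$. Let $\psi$ be the unique function, continuous and positive on $(u_\infty,u_0]$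 and $C^1$ on $(u_\infty,u_0)$, satisfying $\psi'(u)\psi(u)-\frac{\gamma+\delta}{u}\psi(u)=-\delta\,\frac{\beta N-\beta\tilde S e^{(\beta/\gamma)\tilde R}u+\gamma\log u}{u}$ on $(u_\infty,u_0)$ and $\psi(u_0)=\beta\tilde I$. Let $\varphi(u):=\int_u^{u_0}\frac{d\xi}{\xi\psi(\xi)}$; $\varphi$ is a strictly decreasing continuous bijection from $(u_\infty,u_0]$ onto $[0,\infty)$, $C^1$ on $(u_\infty,u_0)$, with inverse $\varphi^{-1}:[0,\infty)\to(u_\infty,u_0]$. For $t\ge 0$ define $S(t)=\tilde S e^{(\beta/\gamma)\tilde R}\varphi^{-1}(t)$, $E(t)=\tilde E e^{-\delta t}+\tilde S e^{(\beta/\gamma)\tilde R}e^{-\delta t}\int_{\varphi^{-1}(t)}^{u_0}e^{\delta\varphi(v)}dv$, $I(t)=N-\tilde S e^{(\beta/\gamma)\tilde R}\varphi^{-1}(t)+\frac{\gamma}{\beta}\log\varphi^{-1}(t)-E(t)$; $S^{-1}$ denotes the inverse of the strictly decreasing function $S$. *)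

theory Defs
  imports "HOL-Analysis.Analysis"
begin

end

theory Submission
  imports Defs
begin

lemma ln_diff_less: "0 < x \<Longrightarrow> 0 < y \<Longrightarrow> x \<noteq> y \<Longrightarrow> ln x - ln y < (x - y) / (y::real)"
proof -
  assume h: "0 < x" "0 < y" "x \<noteq> y"
  have "ln (x/y) \<noteq> x/y - 1" using ln_eq_minus_one[of "x/y"] h by auto
  moreover have "ln (x/y) \<le> x/y - 1" using ln_le_minus_one[of "x/y"] h by auto
  ultimately have "ln (x/y) < x/y - 1" by linarith
  thus ?thesis using h by (simp add: ln_div diff_divide_distrib)
qed

lemma g_dec:
  fixes c k us a b :: real
  assumes "c > 0" "k > 0" "us = k / c" "us \<le> a" "a < b"
  shows "- c * b + k * ln b < - c * a + k * ln a"
proof -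
  have us: "us > 0" using assms by simp
  have a: "a > 0" using us assms by linarith
  have "ln b - ln a < (b - a) / a" using ln_diff_less[of b a] assms a by auto
  also have "\<dots> \<le> (b - a) / us" using assms us a by (intro divide_left_mono) (auto intro: mult_pos_pos)
  finally have L: "ln b - ln a < (b - a) / us" .
  have "k * (ln b - ln a) < k * ((b - a) / us)" using L assms(2) by (rule mult_strict_left_mono)
  also have "k * ((b - a) / us) = c * (b - a)" unfolding assms(3) using assms(1,2) by (simp add: field_simps)
  finally show ?thesis by (simp add: algebra_simps)
qed

lemma g_inc:
  fixes c k us a b :: real
  assumes "c > 0" "k > 0" "us = k / c" "0 < a" "a < b" "b \<le> us"
  shows "- c * a + k * ln a < - c * b + k * ln b"
proof -
  have us: "us > 0" using assms by simp
  have "ln a - ln b < (a - b) / b" using ln_diff_less[of a b] assms by auto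
  moreover have "(a - b) / b = - ((b - a) / b)" by (metis minus_diff_eq minus_divide_left)
  ultimately have "(b - a) / b < ln b - ln a" by linarith
  have "(b - a) / us \<le> (b - a) / b" using assms by (intro divide_left_mono) auto
  with \<open>(b - a) / b < ln b - ln a\<close> have "(b - a) / us < ln b - ln a" by linarith
  hence "k * ((b - a) / us) < k * (ln b - ln a)" using assms(2) by (rule mult_strict_left_mono)
  moreover have "k * ((b - a) / us) = c * (b - a)" unfolding assms(3) using assms(1,2) by (simp add: field_simps)
  ultimately show ?thesis by (simp add: algebra_simps)
qed

lemma g_max:
  fixes c k us u :: real
  assumes "c > 0" "k > 0" "us = k / c" "0 < u"
  shows "- c * u + k * ln u \<le> - c * us + k * ln us"
proof -
  have us: "us > 0" using assms by simp
  have "ln u - ln us \<le> (u - us) / us" using ln_diff_le[of u us] assms us by auto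
  hence "k * (ln u - ln us) \<le> k * ((u - us) / us)" using assms by (intro mult_left_mono) auto
  also have "k * ((u - us) / us) = c * (u - us)" unfolding assms(3) using assms(1,2) by (simp add: field_simps)
  finally show ?thesis by (simp add: algebra_simps)
qed

theorem theorem11:
  fixes \<beta> \<gamma> \<delta> St Et It Rt N \<alpha> u0 uinf :: real
    and \<psi> \<psi>' :: "real \<Rightarrow> real"
    and \<phi> \<phi>inv S E I :: "real \<Rightarrow> real"
  assumes pos: "\<beta> > 0" "\<gamma> > 0" "\<delta> > 0"
    and N_def: "N = St + Et + It + Rt" and Npos: "N > 0"
    and A1: "It > 0"
    and A2: "Et > (\<gamma> / \<delta>) * It"
    and A3: "St > \<delta> * Et / (\<beta> * It)"
    and A4: "Rt \<ge> 0" "N > St * exp ((\<beta> / \<gamma>) * Rt) + Rt"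
    and alpha: "Rt < \<alpha>" "\<alpha> < N"
      "\<alpha> = N - St * exp ((\<beta> / \<gamma>) * Rt) * exp (- (\<beta> / \<gamma>) * \<alpha>)"
    and A5: "St < (\<gamma> / \<beta>) * exp ((\<beta> / \<gamma>) * (\<alpha> - Rt))"
    and u0_def: "u0 = exp (- (\<beta> / \<gamma>) * Rt)"
    and uinf_def: "uinf = exp (- (\<beta> / \<gamma>) * \<alpha>)"
    and psi_cont: "continuous_on {uinf<..u0} \<psi>"
    and psi_pos: "\<forall>u\<in>{uinf<..u0}. \<psi> u > 0"
    and psi_deriv: "\<forall>u\<in>{uinf<..<u0}. (\<psi> has_real_derivative \<psi>' u) (at u)"
    and psi'_cont: "continuous_on {uinf<..<u0} \<psi>'"
    and psi_ode: "\<forall>u\<in>{uinf<..<u0}. \<psi>' u * \<psi> u - (\<gamma> + \<delta>) / u * \<psi> u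
        = - \<delta> * (\<beta> * N - \<beta> * St * exp ((\<beta> / \<gamma>) * Rt) * u + \<gamma> * ln u) / u"
    and psi_u0: "\<psi> u0 = \<beta> * It"
    and phi_def: "\<phi> = (\<lambda>u. integral {u..u0} (\<lambda>\<xi>. 1 / (\<xi> * \<psi> \<xi>)))"
    and phi_bij: "bij_betw \<phi> {uinf<..u0} {0..}"
    and phiinv_def: "\<phi>inv = the_inv_into {uinf<..u0} \<phi>"
    and S_def: "S = (\<lambda>t. St * exp ((\<beta> / \<gamma>) * Rt) * \<phi>inv t)"
    and E_def: "E = (\<lambda>t. Et * exp (- \<delta> * t) + St * exp ((\<beta> / \<gamma>) * Rt) * exp (- \<delta> * t)
        * integral {\<phi>inv t..u0} (\<lambda>v. exp (\<delta> * \<phi> v)))"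
    and I_def: "I = (\<lambda>t. N - St * exp ((\<beta> / \<gamma>) * Rt) * \<phi>inv t + (\<gamma> / \<beta>) * ln (\<phi>inv t) - E t)"
  shows "\<exists>T3. T3 = \<phi> (\<gamma> / (\<beta> * St * exp ((\<beta> / \<gamma>) * Rt)))
     \<and> T3 = integral {\<gamma> / (\<beta> * St * exp ((\<beta> / \<gamma>) * Rt))..u0} (\<lambda>\<xi>. 1 / (\<xi> * \<psi> \<xi>))
     \<and> T3 \<ge> 0
     \<and> T3 = the_inv_into {0..} S (\<gamma> / \<beta>)
     \<and> E T3 + I T3 = St + Et + It - (\<gamma> / \<beta>) * (1 + ln St - ln (\<gamma> / \<beta>))
     \<and> (\<forall>t\<ge>0. E t + I t \<le> E T3 + I T3)
     \<and> strict_mono_on {0..<T3} (\<lambda>t. E t + I t)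
     \<and> strict_antimono_on {T3<..} (\<lambda>t. E t + I t)"
proof -
  define c where "c = St * exp ((\<beta> / \<gamma>) * Rt)"
  define k where "k = \<gamma> / \<beta>"
  define us where "us = \<gamma> / (\<beta> * St * exp ((\<beta> / \<gamma>) * Rt))"
  have k: "k > 0" using pos k_def by simp
  have "\<delta> * Et > \<gamma> * It" using A2 pos by (simp add: field_simps)
  hence "\<delta> * Et / (\<beta> * It) > \<gamma> * It / (\<beta> * It)" using pos A1
    by (intro divide_strict_right_mono) auto
  hence Stg: "St > \<gamma> / \<beta>" using A3 A1 by simp
  have Stpos: "St > 0" using Stg pos by (smt (verit) divide_pos_pos)
  have c: "c > 0" using Stpos c_def by simp
  have us_eq: "us = k / c" unfolding us_def k_def c_def by (simp add: field_simps)
  have us_pos: "us > 0" using us_eq c k by simp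
  have uinf_pos: "uinf > 0" using uinf_def by simp
  have us_u0: "us < u0"
  proof -
    have "k < St" using Stg k_def by simp
    hence "k / St < 1" using Stpos by simp
    hence "k / St / exp ((\<beta> / \<gamma>) * Rt) < 1 / exp ((\<beta> / \<gamma>) * Rt)"
      by (intro divide_strict_right_mono) auto
    thus ?thesis unfolding us_eq c_def u0_def by (simp add: exp_minus field_simps)
  qed
  have us_uinf: "uinf < us"
  proof -
    have "St < k * (exp ((\<beta> / \<gamma>) * \<alpha>) / exp ((\<beta> / \<gamma>) * Rt))"
      using A5 k_def by (simp add: exp_diff right_diff_distrib)
    hence "c < k * exp ((\<beta> / \<gamma>) * \<alpha>)" unfolding c_def by (simp add: field_simps)
    hence "c * uinf < k" unfolding uinf_def by (simp add: exp_minus field_simps)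
    moreover have "c * us = k" using us_eq c by simp
    ultimately have "c * uinf < c * us" by linarith
    thus ?thesis using c by simp
  qed
  have usA: "us \<in> {uinf<..u0}" using us_u0 us_uinf by simp
  have inj: "inj_on \<phi> {uinf<..u0}" using bij_betw_imp_inj_on[OF phi_bij] .
  have img: "\<phi> ` {uinf<..u0} = {0..}" using bij_betw_imp_surj_on[OF phi_bij] .
  have phiinv_in: "\<phi>inv t \<in> {uinf<..u0}" if "t \<ge> 0" for t
    unfolding phiinv_def using that img inj by (intro the_inv_into_into) auto
  have phi_phiinv: "\<phi> (\<phi>inv t) = t" if "t \<ge> 0" for t
    unfolding phiinv_def using that img inj by (intro f_the_inv_into_f) auto
  have phiinv_phi: "\<phi>inv (\<phi> u) = u" if "u \<in> {uinf<..u0}" for u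
    unfolding phiinv_def using that inj by (intro the_inv_into_f_f) auto
  have phi_wdec: "\<phi> b \<le> \<phi> a" if "uinf < a" "a \<le> b" "b \<le> u0" for a b
  proof -
    have cont: "continuous_on {a..u0} (\<lambda>\<xi>. 1 / (\<xi> * \<psi> \<xi>))"
    proof -
      have "continuous_on {a..u0} \<psi>" using psi_cont by (rule continuous_on_subset) (use that in auto)
      moreover have "\<forall>x\<in>{a..u0}. x * \<psi> x \<noteq> 0"
      proof
        fix x assume "x \<in> {a..u0}"
        hence x: "x \<in> {uinf<..u0}" using that by auto
        hence "\<psi> x > 0" using psi_pos by blast
        moreover have "x > 0" using x uinf_pos by auto
        ultimately show "x * \<psi> x \<noteq> 0" by simp
      qed
      ultimately show ?thesis by (intro continuous_intros) auto
    qed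
    have int1: "(\<lambda>\<xi>. 1 / (\<xi> * \<psi> \<xi>)) integrable_on {a..b}"
      using cont by (rule integrable_continuous_interval[OF continuous_on_subset]) (use that in auto)
    have int2: "(\<lambda>\<xi>. 1 / (\<xi> * \<psi> \<xi>)) integrable_on {b..u0}"
      using cont by (rule integrable_continuous_interval[OF continuous_on_subset]) (use that in auto)
    have "\<phi> a = integral {a..b} (\<lambda>\<xi>. 1 / (\<xi> * \<psi> \<xi>)) + \<phi> b"
      unfolding phi_def using Henstock_Kurzweil_Integration.integral_combine[OF that(2) that(3) integrable_continuous_interval[OF cont]] by simp
    moreover have "integral {a..b} (\<lambda>\<xi>. 1 / (\<xi> * \<psi> \<xi>)) \<ge> 0"
    proof (rule integral_nonneg[OF int1])
      fix x assume "x \<in> {a..b}"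
      hence x: "x \<in> {uinf<..u0}" using that by auto
      hence "\<psi> x > 0" using psi_pos by blast
      moreover have "x > 0" using x uinf_pos by auto
      ultimately show "0 \<le> 1 / (x * \<psi> x)" by simp
    qed
    ultimately show ?thesis by simp
  qed
  have phi_sdec: "\<phi> b < \<phi> a" if "uinf < a" "a < b" "b \<le> u0" for a b
  proof -
    have "\<phi> a \<noteq> \<phi> b" using inj that by (auto dest: inj_onD)
    thus ?thesis using phi_wdec[of a b] that by auto
  qed
  have phiinv_sdec: "\<phi>inv t < \<phi>inv s" if "0 \<le> s" "s < t" for s t
  proof (rule ccontr)
    assume "\<not> \<phi>inv t < \<phi>inv s"
    hence "\<phi> (\<phi>inv t) \<le> \<phi> (\<phi>inv s)" using phi_wdec[of "\<phi>inv s" "\<phi>inv t"] phiinv_in that by auto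
    thus False using phi_phiinv that by auto
  qed
  define T3 where "T3 = \<phi> us"
  have T3nn: "T3 \<ge> 0" using img usA T3_def by auto
  have pT3: "\<phi>inv T3 = us" using phiinv_phi usA T3_def by simp
  have EI: "E t + I t = N - c * \<phi>inv t + k * ln (\<phi>inv t)" for t
    unfolding I_def c_def k_def by simp
  have EIg: "E t + I t = N + (- c * \<phi>inv t + k * ln (\<phi>inv t))" for t
    using EI[of t] by simp
  have injS: "inj_on S {0..}"
  proof (rule inj_onI)
    fix x y assume "x \<in> {0..}" "y \<in> {0..}" "S x = S y"
    hence "\<phi>inv x = \<phi>inv y" using S_def Stpos by simp
    hence "\<phi> (\<phi>inv x) = \<phi> (\<phi>inv y)" by simp
    thus "x = y" using phi_phiinv \<open>x \<in> {0..}\<close> \<open>y \<in> {0..}\<close> by simp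
  qed
  have "S T3 = c * \<phi>inv T3" by (simp add: S_def c_def)
  hence ST3: "S T3 = \<gamma> / \<beta>" using pT3 us_eq c k_def by simp
  have T3S: "T3 = the_inv_into {0..} S (\<gamma> / \<beta>)"
    using the_inv_into_f_f[OF injS, of T3] T3nn ST3 by simp
  have val: "E T3 + I T3 = St + Et + It - (\<gamma> / \<beta>) * (1 + ln St - ln (\<gamma> / \<beta>))"
  proof -
    have "ln us = ln k - ln St - (\<beta> / \<gamma>) * Rt"
      unfolding us_eq c_def using k Stpos by (simp add: ln_div ln_mult)
    moreover have "c * us = k" using us_eq c by simp
    moreover have "k * ((\<beta> / \<gamma>) * Rt) = Rt" using pos k_def by simp
    ultimately have A: "ln us = ln k - ln St - (\<beta> / \<gamma>) * Rt" "c * us = k" "k * ((\<beta> / \<gamma>) * Rt) = Rt"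
      by auto
    have "E T3 + I T3 = N - k + k * (ln k - ln St - (\<beta> / \<gamma>) * Rt)"
      using EI[of T3] pT3 A(1,2) by simp
    also have "\<dots> = N - k + k * ln k - k * ln St - k * ((\<beta> / \<gamma>) * Rt)" by (simp add: algebra_simps)
    also have "\<dots> = St + Et + It - k * (1 + ln St - ln k)" using A(3) N_def by (simp add: algebra_simps)
    finally show ?thesis by (simp only: k_def)
  qed
  have maxp: "\<forall>t\<ge>0. E t + I t \<le> E T3 + I T3"
  proof (intro allI impI)
    fix t :: real assume "t \<ge> 0"
    hence "\<phi>inv t > 0" using phiinv_in uinf_pos by force
    hence "- c * \<phi>inv t + k * ln (\<phi>inv t) \<le> - c * us + k * ln us" by (rule g_max[OF c k us_eq])
    thus "E t + I t \<le> E T3 + I T3" using EIg[of t] EIg[of T3, unfolded pT3] by linarith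
  qed
  have mono1: "strict_mono_on {0..<T3} (\<lambda>t. E t + I t)"
  proof (rule strict_mono_onI)
    fix s t assume st: "s \<in> {0..<T3}" "t \<in> {0..<T3}" "s < t"
    have "\<phi>inv T3 < \<phi>inv t" using phiinv_sdec st by auto
    moreover have "\<phi>inv t < \<phi>inv s" using phiinv_sdec st by auto
    ultimately have "- c * \<phi>inv s + k * ln (\<phi>inv s) < - c * \<phi>inv t + k * ln (\<phi>inv t)"
      using g_dec[OF c k us_eq, of "\<phi>inv t" "\<phi>inv s"] pT3 by simp
    thus "E s + I s < E t + I t" using EIg by simp
  qed
  have mono2: "strict_antimono_on {T3<..} (\<lambda>t. E t + I t)"
  proof (rule monotone_onI)
    fix s t assume st: "s \<in> {T3<..}" "t \<in> {T3<..}" "s < t"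
    have "\<phi>inv s < \<phi>inv T3" using phiinv_sdec st T3nn by auto
    moreover have "\<phi>inv t < \<phi>inv s" using phiinv_sdec st T3nn by auto
    moreover have "\<phi>inv t > 0"
    proof -
      have "t \<ge> 0" using st T3nn by auto
      hence "\<phi>inv t \<in> {uinf<..u0}" by (rule phiinv_in)
      thus ?thesis using uinf_pos by auto
    qed
    ultimately have "- c * \<phi>inv t + k * ln (\<phi>inv t) < - c * \<phi>inv s + k * ln (\<phi>inv s)"
      using g_inc[OF c k us_eq, of "\<phi>inv t" "\<phi>inv s"] pT3 by simp
    thus "E t + I t < E s + I s" using EIg by simp
  qed
  have e1: "T3 = \<phi> (\<gamma> / (\<beta> * St * exp ((\<beta> / \<gamma>) * Rt)))" by (simp only: T3_def us_def)
  have e2: "\<phi> (\<gamma> / (\<beta> * St * exp ((\<beta> / \<gamma>) * Rt))) = integral {\<gamma> / (\<beta> * St * exp ((\<beta> / \<gamma>) * Rt))..u0} (\<lambda>\<xi>. 1 / (\<xi> * \<psi> \<xi>))"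
    by (simp only: phi_def)
  show ?thesis
    apply (rule exI[of _ T3])
    using e1 e2 T3nn T3S val maxp mono1 mono2 by (intro conjI) auto
qed

end
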